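(* For all integers $k\ge2$ and $m\ge1$, \[u\big((2^k-1)m-k,\;(2^k-1)m\big)=\varepsilon\big((2^k-1)m-k,\;(2^k-1)m\big)=2^{k-1}m.\]
   Context: All matrices are binary. For a nonempty set $S$ of columns of a binary matrix, let $z$ be the sum over the integers of the columns in $S$. $S$ is called $1$-free if no entry of $z$ equals $1$, and even if all entries of $z$ are even. For a binary $m'\times n'$ matrix $A$ with $m'<n'$: $\varepsilon(A)$ is the smallest cardinality of a nonempty even set of columns, and $u(A)$ the smallest cardinality of a nonempty $1$-free set of columns. For $m'<n'$, $\varepsilon(m',n')$ and $u(m',n')$ are the maxima of $\varepsilon(A)$, resp. $u(A)$, over all binary $m'\times n'$ matrices. *)

theory Defs
  imports Main
begin

text \<open>A binary m' x n' matrix is represented as A :: nat \<Rightarrow> nat \<Rightarrow> bool,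
  where A i j is the entry in row i < m', column j < n' (entries outside
  this range are irrelevant).\<close>

definition colsum :: "(nat \<Rightarrow> nat \<Rightarrow> bool) \<Rightarrow> nat set \<Rightarrow> nat \<Rightarrow> int" where
  "colsum A S i = (\<Sum>j\<in>S. if A i j then 1 else 0)"

definition even_set :: "nat \<Rightarrow> nat \<Rightarrow> (nat \<Rightarrow> nat \<Rightarrow> bool) \<Rightarrow> nat set \<Rightarrow> bool" where
  "even_set m n A S \<longleftrightarrow> S \<noteq> {} \<and> S \<subseteq> {..<n} \<and> (\<forall>i<m. even (colsum A S i))"

definition one_free :: "nat \<Rightarrow> nat \<Rightarrow> (nat \<Rightarrow> nat \<Rightarrow> bool) \<Rightarrow> nat set \<Rightarrow> bool" where
  "one_free m n A S \<longleftrightarrow> S \<noteq> {} \<and> S \<subseteq> {..<n} \<and> (\<forall>i<m. colsum A S i \<noteq> 1)"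

definition eps_mat :: "nat \<Rightarrow> nat \<Rightarrow> (nat \<Rightarrow> nat \<Rightarrow> bool) \<Rightarrow> nat" where
  "eps_mat m n A = (LEAST c. \<exists>S. even_set m n A S \<and> card S = c)"

definition u_mat :: "nat \<Rightarrow> nat \<Rightarrow> (nat \<Rightarrow> nat \<Rightarrow> bool) \<Rightarrow> nat" where
  "u_mat m n A = (LEAST c. \<exists>S. one_free m n A S \<and> card S = c)"

definition eps :: "nat \<Rightarrow> nat \<Rightarrow> nat" where
  "eps m n = Max {eps_mat m n A | A. True}"

definition u :: "nat \<Rightarrow> nat \<Rightarrow> nat" where
  "u m n = Max {u_mat m n A | A. True}"

end

theory Submission
  imports Defs
begin


lemma colsum_symdiff:
  assumes "finite S" "finite T"
  shows "colsum A ((S - T) \<union> (T - S)) i = colsum A S i + colsum A T i - 2 * colsum A (S \<inter> T) i"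
proof -
  have u: "colsum A (S \<union> T) i + colsum A (S \<inter> T) i = colsum A S i + colsum A T i"
    unfolding colsum_def using assms by (rule sum.union_inter)
  have "(S - T) \<union> (T - S) = (S \<union> T) - (S \<inter> T)" by blast
  moreover have "colsum A (S \<union> T) i = colsum A ((S \<union> T) - (S \<inter> T)) i + colsum A (S \<inter> T) i"
    unfolding colsum_def using assms
    by (metis add.commute finite_UnI inf_le1 le_supI1 sum.subset_diff)
  ultimately show ?thesis using u by simp
qed

lemma even_symdiff:
  assumes "finite S" "finite T"
  shows "even (colsum A ((S - T) \<union> (T - S)) i) \<longleftrightarrow> (even (colsum A S i) \<longleftrightarrow> even (colsum A T i))"
  using colsum_symdiff[OF assms, of A i] by simp



definition Kset :: "nat \<Rightarrow> nat \<Rightarrow> (nat \<Rightarrow> nat \<Rightarrow> bool) \<Rightarrow> nat set set" where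
  "Kset m' n A = {S. S \<subseteq> {..<n} \<and> (\<forall>i<m'. even (colsum A S i))}"

lemma Kset_finite: "finite (Kset m' n A)"
  by (rule finite_subset[of _ "Pow {..<n}"]) (auto simp: Kset_def)

lemma Kset_symdiff: "S \<in> Kset m' n A \<Longrightarrow> T \<in> Kset m' n A \<Longrightarrow> (S - T) \<union> (T - S) \<in> Kset m' n A"
  unfolding Kset_def using even_symdiff finite_subset
  by (smt (verit) Diff_subset Un_subset_iff finite_lessThan mem_Collect_eq subset_trans)

lemma Kset_card:
  assumes "n = m' + k"
  shows "2^k \<le> card (Kset m' n A)"
proof -
  define syn where "syn S = map (\<lambda>i. odd (colsum A S i)) [0..<m']" for S
  define rep where "rep v = (SOME T. T \<subseteq> {..<n} \<and> syn T = v)" for v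
  define f where "f S = (syn S, (S - rep (syn S)) \<union> (rep (syn S) - S))" for S
  have rep: "rep (syn S) \<subseteq> {..<n} \<and> syn (rep (syn S)) = syn S" if "S \<subseteq> {..<n}" for S
    unfolding rep_def by (rule someI[of _ S]) (use that in auto)
  have inj: "inj_on f (Pow {..<n})"
  proof
    fix S S' assume "S \<in> Pow {..<n}" "S' \<in> Pow {..<n}" "f S = f S'"
    then have "syn S = syn S'" and "(S - rep (syn S)) \<union> (rep (syn S) - S) = (S' - rep (syn S)) \<union> (rep (syn S) - S')"
      unfolding f_def by auto
    then show "S = S'" by blast
  qed
  have img: "f ` Pow {..<n} \<subseteq> {xs. set xs \<subseteq> UNIV \<and> length xs = m'} \<times> Kset m' n A"
  proof
    fix p assume "p \<in> f ` Pow {..<n}"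
    then obtain S where S: "S \<subseteq> {..<n}" "p = f S" by auto
    have R: "rep (syn S) \<subseteq> {..<n}" "syn (rep (syn S)) = syn S" using rep[OF S(1)] by auto
    have fin: "finite S" "finite (rep (syn S))" using S(1) R(1) finite_subset by auto
    have "\<forall>i<m'. even (colsum A S i) = even (colsum A (rep (syn S)) i)"
    proof (intro allI impI)
      fix i assume "i < m'"
      then have "syn S ! i = syn (rep (syn S)) ! i" using R by simp
      then show "even (colsum A S i) = even (colsum A (rep (syn S)) i)"
        using \<open>i < m'\<close> unfolding syn_def by simp
    qed
    then have "(S - rep (syn S)) \<union> (rep (syn S) - S) \<in> Kset m' n A"
      unfolding Kset_def using even_symdiff[OF fin] S(1) R(1) by auto
    then show "p \<in> {xs. set xs \<subseteq> UNIV \<and> length xs = m'} \<times> Kset m' n A"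
      using S unfolding f_def syn_def by auto
  qed
  have "2^n = card (Pow {..<n::nat})" by (simp add: card_Pow)
  also have "\<dots> \<le> card ({xs. set xs \<subseteq> (UNIV::bool set) \<and> length xs = m'} \<times> Kset m' n A)"
    using card_inj_on_le[OF inj img] Kset_finite[of m' n A] finite_lists_length_eq[of "UNIV::bool set" m']
    by simp
  also have "\<dots> = 2^m' * card (Kset m' n A)"
    using card_lists_length_eq[of "UNIV::bool set" m'] by (simp add: card_cartesian_product)
  finally have "2^m' * 2^k \<le> 2^m' * card (Kset m' n A)" using assms by (simp add: power_add)
  then show ?thesis by simp
qed



lemma Kset_empty: "{} \<in> Kset m' n A"
  by (simp add: Kset_def colsum_def)

lemma half_bound: "2 * card {S \<in> Kset m' n A. j \<in> S} \<le> card (Kset m' n A)"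
proof (cases "{S \<in> Kset m' n A. j \<in> S} = {}")
  case True then have "{S \<in> Kset m' n A. j \<in> S} = {}" by simp
  then show ?thesis by (metis card.empty mult_0_right zero_le)
next
  case False
  let ?K = "Kset m' n A"
  from False obtain T where T: "T \<in> ?K" "j \<in> T" by auto
  define g where "g S = (S - T) \<union> (T - S)" for S
  have "inj_on g {S \<in> ?K. j \<in> S}" unfolding g_def inj_on_def by blast
  moreover have "g ` {S \<in> ?K. j \<in> S} \<subseteq> {S \<in> ?K. j \<notin> S}"
    using Kset_symdiff[OF _ T(1)] T(2) unfolding g_def by auto
  ultimately have le: "card {S \<in> ?K. j \<in> S} \<le> card {S \<in> ?K. j \<notin> S}"
    using card_inj_on_le Kset_finite by (metis (no_types, lifting) finite_subset mem_Collect_eq subsetI)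
  have "card ?K = card {S \<in> ?K. j \<in> S} + card {S \<in> ?K. j \<notin> S}"
    using Kset_finite[of m' n A] by (subst card_Un_disjoint[symmetric]) (auto intro: arg_cong[where f=card])
  with le show ?thesis by simp
qed

lemma sum_card_Kset: "2 * (\<Sum>S\<in>Kset m' n A. card S) \<le> n * card (Kset m' n A)"
proof -
  let ?K = "Kset m' n A"
  have "(\<Sum>S\<in>?K. card S) = (\<Sum>S\<in>?K. \<Sum>j<n. if j \<in> S then 1 else 0)"
  proof (rule sum.cong)
    fix S assume "S \<in> ?K"
    then have "S \<subseteq> {..<n}" by (simp add: Kset_def)
    then have "S = {j \<in> {..<n}. j \<in> S}" by auto
    then have "card S = card {j \<in> {..<n}. j \<in> S}" by simp
    also have "\<dots> = (\<Sum>j<n. if j \<in> S then 1 else 0)"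
      by (simp add: sum.If_cases Int_def conj_commute)
    finally show "card S = (\<Sum>j<n. if j \<in> S then 1 else 0)" .
  qed simp
  also have "\<dots> = (\<Sum>j<n. \<Sum>S\<in>?K. if j \<in> S then 1 else 0)" by (rule sum.swap)
  also have "\<dots> = (\<Sum>j<n. card {S \<in> ?K. j \<in> S})"
    using Kset_finite[of m' n A] by (simp add: sum.If_cases Int_def)
  finally have "2 * (\<Sum>S\<in>?K. card S) = (\<Sum>j<n. 2 * card {S \<in> ?K. j \<in> S})"
    by (simp add: sum_distrib_left)
  also have "\<dots> \<le> (\<Sum>j<n. card ?K)" by (rule sum_mono) (rule half_bound)
  finally show ?thesis by simp
qed



lemma arith_contra:
  fixes q m N B n :: nat
  assumes "2 * B = q * m" "n = (q - 1) * m" "q \<le> N" "2 \<le> q" "1 \<le> m"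
    and "2 * ((B + 1) * (N - 1)) \<le> n * N"
  shows False
proof -
  have N1: "1 \<le> N" using assms by simp
  have b: "2 * int B = int q * int m" using assms(1) by (metis of_nat_mult of_nat_numeral)
  obtain N' where N': "N = Suc N'" using N1 by (cases N) auto
  have e00: "int ((B+1)*(N-1)) = (int B + 1) * (int N - 1)" using N' by (simp add: algebra_simps)
  have e0: "int (2 * ((B + 1) * (N - 1))) = (2 * int B + 2) * (int N - 1)"
  proof -
    have "int (2 * ((B + 1) * (N - 1))) = 2 * ((int B + 1) * (int N - 1))"
      using e00 by (metis of_nat_mult of_nat_numeral)
    then show ?thesis by (simp add: distrib_left distrib_right mult.assoc)
  qed
  have e1: "int (2 * ((B + 1) * (N - 1))) = (int q * int m + 2) * (int N - 1)"
    using e0 b by simp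
  have e2: "int (n * N) = (int q - 1) * int m * int N"
  proof -
    have "int (q - 1) = int q - 1" using assms(4) by simp
    then have "int n = (int q - 1) * int m" using assms(2) by (metis of_nat_mult)
    then show ?thesis by (metis of_nat_mult)
  qed
  have "(int q * int m + 2) * (int N - 1) \<le> (int q - 1) * int m * int N"
    using assms(6) e1 e2 by linarith
  then have "2 * int N + int m * int N \<le> int q * int m + 2" by (simp add: algebra_simps)
  moreover have "int m * int q \<le> int m * int N" using assms(3) by (simp add: mult_left_mono)
  ultimately show False using assms(3,4) by (simp add: algebra_simps)
qed

lemma upper:
  fixes k m n m' :: nat and A
  assumes "k \<ge> 1" "m \<ge> 1" "n = (2^k - 1) * m" "m' = n - k"
  shows "\<exists>S. even_set m' n A S \<and> card S \<le> 2^(k-1) * m"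
proof (rule ccontr)
  assume neg: "\<not> ?thesis"
  let ?K = "Kset m' n A"
  let ?B = "2^(k-1) * m"
  have kq: "k < 2^k" by (rule less_exp)
  have "k \<le> 2^k - 1" using kq by linarith
  also have "\<dots> \<le> (2^k - 1) * m" using assms(2) by simp
  finally have "k \<le> n" using assms(3) by simp
  then have nk: "n = m' + k" using assms by simp
  have Kc: "2^k \<le> card ?K" using Kset_card[OF nk] .
  have big: "?B + 1 \<le> card S" if "S \<in> ?K" "S \<noteq> {}" for S
  proof -
    have "even_set m' n A S" using that by (simp add: Kset_def even_set_def)
    then have "\<not> card S \<le> ?B" using neg by blast
    then show ?thesis by linarith
  qed
  have "(\<Sum>S\<in>?K - {{}}. ?B + 1) \<le> (\<Sum>S\<in>?K - {{}}. card S)"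
    by (rule sum_mono) (use big in auto)
  also have "\<dots> \<le> (\<Sum>S\<in>?K. card S)" by (rule sum_mono2) (auto simp: Kset_finite)
  finally have "(?B + 1) * (card ?K - 1) \<le> (\<Sum>S\<in>?K. card S)"
    using Kset_empty Kset_finite by (simp add: card_Diff_singleton mult.commute)
  then have f6: "2 * ((?B + 1) * (card ?K - 1)) \<le> n * card ?K"
    using sum_card_Kset[of m' n A] by linarith
  have f1: "2 * ?B = 2^k * m" using assms(1)
    by (metis mult.assoc power_Suc Suc_diff_1 One_nat_def less_eq_Suc_le)
  have f4: "2 \<le> (2::nat)^k" using assms(1) using power_increasing[of 1 k "2::nat"] by simp
  show False by (rule arith_contra[OF f1 assms(3) Kc f4 assms(2) f6])
qed



definition goodP :: "nat \<Rightarrow> nat \<Rightarrow> (nat \<Rightarrow> nat \<Rightarrow> bool) \<Rightarrow> bool" where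
  "goodP k m A \<longleftrightarrow> (\<forall>S. S \<noteq> {} \<longrightarrow> S \<subseteq> {..<(2^k-1)*m} \<longrightarrow>
      (\<forall>i<(2^k-1)*m - k. colsum A S i \<noteq> 1) \<longrightarrow> 2^(k-1)*m \<le> card S)"

definition ind :: "nat \<Rightarrow> nat set \<Rightarrow> int" where "ind a S = (if a \<in> S then 1 else 0)"

lemma sum3:
  assumes "finite S" "a \<noteq> b" "a \<noteq> c" "b \<noteq> c"
  shows "(\<Sum>j\<in>S. if j = a \<or> j = b \<or> j = c then 1 else 0 :: int) = ind a S + ind b S + ind c S"
proof -
  have "(\<Sum>j\<in>S. if j = a \<or> j = b \<or> j = c then 1 else 0 :: int)
      = (\<Sum>j\<in>S. (if a = j then 1 else 0) + (if b = j then 1 else 0) + (if c = j then 1 else 0))"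
    by (rule sum.cong) (use assms in auto)
  also have "\<dots> = ind a S + ind b S + ind c S"
    by (simp add: sum.distrib ind_def assms(1))
  finally show ?thesis .
qed

lemma sum2:
  assumes "finite S" "a \<noteq> b"
  shows "(\<Sum>j\<in>S. if j = a \<or> j = b then 1 else 0 :: int) = ind a S + ind b S"
proof -
  have "(\<Sum>j\<in>S. if j = a \<or> j = b then 1 else 0 :: int)
      = (\<Sum>j\<in>S. (if a = j then 1 else 0) + (if b = j then 1 else 0))"
    by (rule sum.cong) (use assms in auto)
  also have "\<dots> = ind a S + ind b S"
    by (simp add: sum.distrib ind_def assms(1))
  finally show ?thesis .
qed

lemma good_base:
  assumes "m \<ge> 1"
  shows "\<exists>A. goodP 1 m A"
proof -
  define A where "A i j = (j = 0 \<or> j = i + 1)" for i j :: nat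
  have "goodP 1 m A" unfolding goodP_def
  proof (intro allI impI)
    fix S assume ne: "S \<noteq> {}" and sub: "S \<subseteq> {..<(2^1-1)*m}"
      and nf: "\<forall>i<(2^1-1)*m - 1. colsum A S i \<noteq> 1"
    have sub': "S \<subseteq> {..<m}" using sub by simp
    have fin: "finite S" using sub' finite_subset by auto
    have row: "colsum A S t = ind 0 S + ind (t+1) S" for t
      unfolding colsum_def A_def using sum2[OF fin, of 0 "t+1"] by simp
    have "0 \<in> S"
    proof (rule ccontr)
      assume n0: "0 \<notin> S"
      from ne obtain x where x: "x \<in> S" by auto
      with n0 have "x \<noteq> 0" by (metis)
      then obtain t where t: "x = t + 1" by (cases x) auto
      have "t < m - 1" using x t sub' by auto
      then have "colsum A S t \<noteq> 1" using nf by simp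
      then show False using row[of t] n0 x t by (simp add: ind_def)
    qed
    have "{..<m} \<subseteq> S"
    proof
      fix x assume x: "x \<in> {..<m}"
      show "x \<in> S"
      proof (cases x)
        case 0 then show ?thesis using \<open>0 \<in> S\<close> by simp
      next
        case (Suc t)
        then have "t < m - 1" using x by auto
        then have "colsum A S t \<noteq> 1" using nf by simp
        then show ?thesis using row[of t] \<open>0 \<in> S\<close> Suc by (auto simp: ind_def split: if_splits)
      qed
    qed
    then have "S = {..<m}" using sub' by auto
    then show "2^(1-1)*m \<le> card S" by simp
  qed
  then show ?thesis by blast
qed



lemma good_step:
  assumes k1: "k \<ge> 1" and m1: "m \<ge> 1" and gA: "goodP k m A"
  shows "\<exists>A'. goodP (Suc k) m A'"
proof -
  define N where "N = (2^k - 1) * m"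
  have kN: "k \<le> N"
  proof -
    have "k < 2^k" by (rule less_exp)
    then have "k \<le> 2^k - 1" by linarith
    also have "\<dots> \<le> (2^k - 1) * m" using m1 by simp
    finally show ?thesis unfolding N_def .
  qed
  have N': "(2^(Suc k) - 1) * m = 2*N + m"
  proof -
    have "(2::nat)^k \<ge> 1" by simp
    then have "(2::nat)^(Suc k) - 1 = 2 * (2^k - 1) + 1" by (simp only: power_Suc)
    then have "(2^(Suc k) - 1) * m = (2 * (2^k - 1) + 1) * m" by (simp only:)
    also have "\<dots> = 2 * ((2^k - 1) * m) + m" by (simp only: add_mult_distrib mult.assoc mult_1)
    finally show ?thesis unfolding N_def .
  qed
  have Bk: "2^(Suc k - 1) * m = N + m"
  proof -
    have "(2::nat)^k = (2^k - 1) + 1" by simp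
    then have "(2::nat)^k * m = (2^k - 1) * m + m" by (metis add.commute mult.commute mult_Suc_right plus_1_eq_Suc)
    then show ?thesis unfolding N_def by simp
  qed
  define A' where "A' i j = (if i < N - k then j < N \<and> A i j
      else if i < 2*N - k then (j = i - (N - k) \<or> j = N + (i - (N - k)) \<or> j = 2*N)
      else (j = 2*N \<or> j = 2*N + (i - (2*N - k)) + 1))" for i j
  have "goodP (Suc k) m A'" unfolding goodP_def N' Bk
  proof (intro allI impI)
    fix S assume ne: "S \<noteq> {}" and sub: "S \<subseteq> {..<2*N+m}"
      and nf: "\<forall>i<2*N+m - Suc k. colsum A' S i \<noteq> 1"
    have fin: "finite S" using sub finite_subset by auto
    have rowv: "colsum A' S (N - k + v) = ind v S + ind (N+v) S + ind (2*N) S" if "v < N" for v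
    proof -
      have "colsum A' S (N - k + v) = (\<Sum>j\<in>S. if j = v \<or> j = N+v \<or> j = 2*N then 1 else 0)"
      proof -
        have a: "\<not> (N - k + v < N - k)" "N - k + v < 2*N - k" "N - k + v - (N - k) = v"
          using that kN by linarith+
        show ?thesis unfolding colsum_def A'_def by (simp only: a if_False if_True)
      qed
      also have "\<dots> = ind v S + ind (N+v) S + ind (2*N) S"
        by (rule sum3[OF fin]) (use that in auto)
      finally show ?thesis .
    qed
    have nfv: "ind v S + ind (N+v) S + ind (2*N) S \<noteq> 1" if "v < N" for v
    proof -
      have "N - k + v < 2*N + m - Suc k" using that kN m1 by linarith
      then show ?thesis using nf rowv[OF that] by metis
    qed
    have rowt: "colsum A' S (2*N - k + t) = ind (2*N) S + ind (2*N + t + 1) S" for t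
    proof -
      have "colsum A' S (2*N - k + t) = (\<Sum>j\<in>S. if j = 2*N \<or> j = 2*N + t + 1 then 1 else 0)"
      proof -
        have a: "\<not> (2*N - k + t < N - k)" "\<not> (2*N - k + t < 2*N - k)" "2*N - k + t - (2*N - k) = t"
          using kN by linarith+
        show ?thesis unfolding colsum_def A'_def by (simp only: a if_False if_True)
      qed
      also have "\<dots> = ind (2*N) S + ind (2*N + t + 1) S"
        by (rule sum2[OF fin]) auto
      finally show ?thesis .
    qed
    have nft: "ind (2*N) S + ind (2*N + t + 1) S \<noteq> 1" if "t < m - 1" for t
    proof -
      have "2*N - k + t < 2*N + m - Suc k" using that kN by linarith
      then show ?thesis using nf rowt[of t] by metis
    qed
    have rowb: "colsum A' S i = colsum A (S \<inter> {..<N}) i" if "i < N - k" for i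
    proof -
      have "colsum A (S \<inter> {..<N}) i = (\<Sum>j\<in>S. if j \<in> {..<N} then (if A i j then 1 else 0) else 0)"
        unfolding colsum_def by (rule sum.inter_restrict[OF fin])
      also have "\<dots> = colsum A' S i"
        unfolding colsum_def A'_def using that by (intro sum.cong) auto
      finally show ?thesis by simp
    qed
    show "N + m \<le> card S"
    proof (cases "2*N \<in> S")
      case True
      have Z: "{2*N..<2*N+m} \<subseteq> S"
      proof
        fix z assume z: "z \<in> {2*N..<2*N+m}"
        show "z \<in> S"
        proof (cases "z = 2*N")
          case True then show ?thesis using \<open>2*N \<in> S\<close> by simp
        next
          case False
          define t where "t = z - 2*N - 1"
          have t: "z = 2*N + t + 1" using z False unfolding t_def by auto
          then have "t < m - 1" using z by auto
          from nft[OF this] show ?thesis using True t by (auto simp: ind_def split: if_splits)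
        qed
      qed
      define g where "g v = (if v \<in> S then v else N + v)" for v
      have gS: "g ` {..<N} \<subseteq> S \<inter> {..<2*N}"
      proof
        fix x assume "x \<in> g ` {..<N}"
        then obtain v where v: "v < N" "x = g v" by auto
        have "v \<in> S \<or> N + v \<in> S" using nfv[OF v(1)] True by (auto simp: ind_def split: if_splits)
        then show "x \<in> S \<inter> {..<2*N}" using v unfolding g_def by auto
      qed
      have ginj: "inj_on g {..<N}" unfolding g_def inj_on_def by auto
      have "card (g ` {..<N}) = N" using card_image[OF ginj] by simp
      moreover have "card {2*N..<2*N+m} = m" by simp
      moreover have "g ` {..<N} \<inter> {2*N..<2*N+m} = {}" using gS by auto
      ultimately have "card (g ` {..<N} \<union> {2*N..<2*N+m}) = N + m"
        by (simp add: card_Un_disjoint)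
      moreover have "g ` {..<N} \<union> {2*N..<2*N+m} \<subseteq> S" using gS Z by auto
      ultimately show ?thesis using card_mono[OF fin] by metis
    next
      case False
      let ?P = "S \<inter> {..<N}"
      have eqv: "v \<in> S \<longleftrightarrow> N + v \<in> S" if "v < N" for v
        using nfv[OF that] False by (auto simp: ind_def split: if_splits)
      have noZ: "x < 2*N" if "x \<in> S" for x
      proof (rule ccontr)
        assume "\<not> x < 2*N"
        moreover have "x < 2*N+m" using that sub by auto
        moreover have "x \<noteq> 2*N" using False that by auto
        ultimately have t: "x = 2*N + (x - 2*N - 1) + 1" "x - 2*N - 1 < m - 1" by linarith+
        show False using nft[OF t(2)] False that t(1) by (simp add: ind_def)
      qed
      have Seq: "S = ?P \<union> (\<lambda>v. N + v) ` ?P"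
      proof
        show "S \<subseteq> ?P \<union> (\<lambda>v. N + v) ` ?P"
        proof
          fix x assume x: "x \<in> S"
          show "x \<in> ?P \<union> (\<lambda>v. N + v) ` ?P"
          proof (cases "x < N")
            case True then show ?thesis using x by auto
          next
            case False
            then have "x - N < N" "x = N + (x - N)" using noZ[OF x] by auto
            then have "x - N \<in> ?P" using eqv x by auto
            then show ?thesis using \<open>x = N + (x - N)\<close> by blast
          qed
        qed
        show "?P \<union> (\<lambda>v. N + v) ` ?P \<subseteq> S" using eqv by auto
      qed
      have Pne: "?P \<noteq> {}" using ne Seq by auto
      have "2^(k-1)*m \<le> card ?P"
      proof -
        have c1: "\<forall>i<N - k. colsum A ?P i \<noteq> 1"
        proof (intro allI impI)
          fix i assume i: "i < N - k"
          then have "i < 2*N + m - Suc k" by linarith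
          then show "colsum A ?P i \<noteq> 1" using nf rowb[OF i] by metis
        qed
        have c2: "?P \<subseteq> {..<N}" by auto
        have gA': "\<And>S. S \<noteq> {} \<Longrightarrow> S \<subseteq> {..<N} \<Longrightarrow> (\<forall>i<N-k. colsum A S i \<noteq> 1) \<Longrightarrow> 2^(k-1)*m \<le> card S"
          using gA unfolding goodP_def N_def by (simp only: atomize_imp atomize_all) blast
        show ?thesis by (rule gA'[OF Pne c2 c1])
      qed
      moreover have "card S = 2 * card ?P"
      proof -
        have "card ((\<lambda>v. N + v) ` ?P) = card ?P" by (rule card_image) (simp add: inj_on_def)
        moreover have "?P \<inter> (\<lambda>v. N + v) ` ?P = {}" by auto
        ultimately show ?thesis using Seq fin
          by (metis card_Un_disjoint finite_Int finite_imageI mult_2)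
      qed
      moreover have "2 * (2^(k-1)*m) = N + m" using Bk k1
        by (metis Suc_diff_1 diff_Suc_1 less_eq_Suc_le mult.assoc power_Suc One_nat_def)
      ultimately show ?thesis by linarith
    qed
  qed
  then show ?thesis by blast
qed



lemma good_exists: assumes m1: "m \<ge> 1" shows "k \<ge> 1 \<Longrightarrow> \<exists>A. goodP k m A"
proof (induction k rule: nat_induct_at_least)
  case base then show ?case using good_base[OF m1] by simp
next
  case (Suc k)
  from Suc.IH obtain A where "goodP k m A" by blast
  then show ?case by (rule good_step[OF Suc.hyps m1])
qed

lemma even_one_free: assumes "even_set m' n A S" shows "one_free m' n A S"
proof -
  have "colsum A S i \<noteq> 1" if "i < m'" for i
  proof
    assume "colsum A S i = 1"
    moreover have "even (colsum A S i)" using assms that unfolding even_set_def by blast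
    ultimately show False by simp
  qed
  then show ?thesis using assms unfolding even_set_def one_free_def by blast
qed

lemma eps_le:
  assumes "\<exists>S. even_set m' n A S \<and> card S \<le> B"
  shows "eps_mat m' n A \<le> B"
proof -
  from assms obtain S where S: "even_set m' n A S" "card S \<le> B" by blast
  have "eps_mat m' n A \<le> card S" unfolding eps_mat_def
    by (rule Least_le) (use S(1) in blast)
  then show ?thesis using S(2) by simp
qed

lemma u_le_eps:
  assumes "\<exists>S. even_set m' n A S"
  shows "u_mat m' n A \<le> eps_mat m' n A"
proof -
  have "\<exists>S. even_set m' n A S \<and> card S = eps_mat m' n A"
    unfolding eps_mat_def by (rule LeastI_ex) (use assms in blast)
  then obtain S where S: "even_set m' n A S" "card S = eps_mat m' n A" by blast
  have of: "one_free m' n A S" using S(1) by (rule even_one_free)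
  have "u_mat m' n A \<le> card S" unfolding u_mat_def by (rule Least_le) (use of in blast)
  then show ?thesis using S(2) by simp
qed



theorem theorem6p3:
  fixes k m :: nat
  assumes "k \<ge> 2" and "m \<ge> 1"
  shows "u ((2^k - 1) * m - k) ((2^k - 1) * m) = 2^(k-1) * m
       \<and> eps ((2^k - 1) * m - k) ((2^k - 1) * m) = 2^(k-1) * m"
proof -
  define n where "n = (2^k - 1) * m"
  define m' where "m' = n - k"
  define B where "B = 2^(k-1) * m"
  have k1: "k \<ge> 1" using assms by simp
  have up: "\<exists>S. even_set m' n A S \<and> card S \<le> B" for A
    using upper[OF k1 assms(2) n_def m'_def] unfolding B_def .
  have epsB: "eps_mat m' n A \<le> B" for A using eps_le[OF up] .
  have uB: "u_mat m' n A \<le> eps_mat m' n A" for A using u_le_eps up by blast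
  obtain A0 where gA: "goodP k m A0" using good_exists[OF assms(2) k1] by blast
  have "\<exists>S. one_free m' n A0 S \<and> card S = u_mat m' n A0"
    unfolding u_mat_def by (rule LeastI_ex) (use up[of A0] even_one_free in blast)
  then obtain S where S: "one_free m' n A0 S" "card S = u_mat m' n A0" by blast
  have gA': "\<And>S. S \<noteq> {} \<Longrightarrow> S \<subseteq> {..<n} \<Longrightarrow> (\<forall>i<m'. colsum A0 S i \<noteq> 1) \<Longrightarrow> B \<le> card S"
    using gA unfolding goodP_def n_def m'_def B_def by (simp only: atomize_imp atomize_all) blast
  have s1: "S \<noteq> {}" "S \<subseteq> {..<n}" "\<forall>i<m'. colsum A0 S i \<noteq> 1" using S(1) unfolding one_free_def by auto
  have "B \<le> card S" by (rule gA'[OF s1])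
  then have u0: "u_mat m' n A0 = B" using S(2) uB[of A0] epsB[of A0] by simp
  have e0: "eps_mat m' n A0 = B" using u0 uB[of A0] epsB[of A0] by simp
  have ub: "y \<le> B" if "y \<in> {u_mat m' n A |A. True}" for y
  proof -
    from that obtain A where "y = u_mat m' n A" by blast
    then show ?thesis using uB[of A] epsB[of A] by linarith
  qed
  have eb: "y \<le> B" if "y \<in> {eps_mat m' n A |A. True}" for y
  proof -
    from that obtain A where "y = eps_mat m' n A" by blast
    then show ?thesis using epsB[of A] by linarith
  qed
  have "u m' n = B"
    unfolding u_def
  proof (rule Max_eqI)
    show "finite {u_mat m' n A |A. True}"
      using ub by (intro finite_subset[OF _ finite_atMost[of B]]) blast
  next
    fix y assume "y \<in> {u_mat m' n A |A. True}"
    then show "y \<le> B" by (rule ub)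
  next
    have "u_mat m' n A0 \<in> {u_mat m' n A |A. True}" by blast
    then show "B \<in> {u_mat m' n A |A. True}" using u0 by simp
  qed
  moreover have "eps m' n = B"
    unfolding eps_def
  proof (rule Max_eqI)
    show "finite {eps_mat m' n A |A. True}"
      using eb by (intro finite_subset[OF _ finite_atMost[of B]]) blast
  next
    fix y assume "y \<in> {eps_mat m' n A |A. True}"
    then show "y \<le> B" by (rule eb)
  next
    have "eps_mat m' n A0 \<in> {eps_mat m' n A |A. True}" by blast
    then show "B \<in> {eps_mat m' n A |A. True}" using e0 by simp
  qed
  ultimately show ?thesis unfolding B_def m'_def n_def by (rule conjI)
qed

end
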